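(* Let $n\geq1$, $1\leq k\leq n$, and let $\eta_k=(z_k,d_{k,0},\ldots,d_{k,r})$ be as constructed below; write $v_i=v_{i,\eta_k}$ and $r_i=r_{i,\eta_k}$. Then: (1) $d_{k,l}>0$ for all $l\in\{1,\ldots,r\}$; in particular $\eta_k\in\Omega$. (2) For $i\in\{1,\ldots,n\}$, let $l\in\{1,\ldots,r\}$ be the unique index with $\sum_{j=0}^{l-1}d_{k,j}<i\leq\sum_{j=1}^ld_{k,j}$. Then $f_k(v_i)+r_i\leq f_k\big((\sum_{j\text{ even},j\leq l}d_{k,j}+1)(n,n+1)\big)$ if $z_k=1$, $l$ odd; $f_k(v_i)+r_i\leq f_k\big((\sum_{j\text{ odd},j\leq l}d_{k,j}+1)(1,0)\big)$ if $z_k=1$, $l$ even; $f_k(v_i)+r_i\leq f_k\big((\sum_{j\text{ even},j\leq l}d_{k,j}+1)(1,0)\big)$ if $z_k=0$, $l$ odd; $f_k(v_i)+r_i\leq f_k\big((\sum_{j\text{ odd},j\leq l}d_{k,j}+1)(n,n+1)\big)$ if $z_k=0$, $l$ even. (3) If $i,i'$ are positive integers with $\sum_{j=0}^{l-1}d_{k,j}<i<i'\leq\sum_{j=0}^ld_{k,j}$ for some $l\in\{1,\ldots,r\}$, then $f_k(v_i)+r_i\leq f_k(v_{i'})+r_{i'}$. (4) For all $1\leq i<i'\leq n$, $f_k(v_i+r_i(1,1))\leq f_k(v_{i'}+r_{i'}(1,1))$. (5) If $l>2$ and $f_k(v_l+r_l(1,1))=f_k(v_{l-1}+r_{l-1}(1,1))$,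 then $f_k(v_l+r_l(1,1))\geq f_k(v_{l-2}+r_{l-2}(1,1))+2$.
   Context: $f_k(v)=kv_1+(1-k)v_2$ for $v\in\mathbb N^2$ (so $f_k((1,0))=k$, $f_k((n,n+1))=n+1-k$). $\Omega$ is the set of $\eta=(z,d_0,\ldots,d_r)$ with $z\in\{0,1\}$, $d_0=0$, $d_i\geq1$ ($1\leq i\leq r$), $\sum d_i=n$. For $j\in\{1,\ldots,n\}$, $t$ is unique with $\sum_{i<t}d_i<j\leq\sum_{i\leq t}d_i$, $c=j-\sum_{i<t}d_i$; $v_{j,\eta}=(\sum_{i\text{ odd},i<t}d_i+c,0)$ if $z=1,t$ odd; $(0,\sum_{i\text{ even},i<t}d_i+c)$ if $z=1,t$ even; $(0,\sum_{i\text{ odd},i<t}d_i+c)$ if $z=0,t$ odd; $(\sum_{i\text{ even},i<t}d_i+c,0)$ if $z=0,t$ even; $r_{j,\eta}=n\cdot\pi_2(v_{j,\eta})$. Construction of $\eta_k$: $z_k=1$ if $k\leq n+1-k$, else $z_k=0$; $d_{k,0}=0$; for $l\geq1$ with $O_l=\sum_{j\text{ odd},j\leq l-1}d_{k,j}$, $E_l=\sum_{j\text{ even},j\leq l-1}d_{k,j}$: $t_l=\max\{m\in\mathbb N:mk\leq(E_l+1)(n+1-k)\}$ ($z_k=1$, $l$ odd), $\max\{m:m(n+1-k)\leq(O_l+1)k\}$ ($z_k=1$, $l$ even), $\max\{m:m(n+1-k)\leq(E_l+1)k\}$ ($z_k=0$, $l$ odd), $\max\{m:mk\leq(O_l+1)(n+1-k)\}$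 ($z_k=0$, $l$ even); $s_1=0$, $s_l=O_l$ for odd $l>1$, $s_l=E_l$ for even $l$; $d_{k,l}=\min\{n-\sum_{j=0}^{l-1}d_{k,j},t_l-s_l\}$; the process stops at the first $r$ with $\sum_{j=1}^rd_{k,j}=n$. *)

theory Defs
  imports Main
begin

definition fk :: "nat \<Rightarrow> int \<times> int \<Rightarrow> int" where
  "fk k v = int k * fst v + (1 - int k) * snd v"

definition smul :: "int \<Rightarrow> int \<times> int \<Rightarrow> int \<times> int" where
  "smul c v = (c * fst v, c * snd v)"

definition vadd :: "int \<times> int \<Rightarrow> int \<times> int \<Rightarrow> int \<times> int" where
  "vadd v w = (fst v + fst w, snd v + snd w)"

text \<open>An element eta = (z, d_0, ..., d_r) is represented as a pair (z, [d_0, ..., d_r]).\<close>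
type_synonym eta = "nat \<times> int list"

definition psum :: "int list \<Rightarrow> nat \<Rightarrow> int" where
  "psum ds m = (\<Sum>i<m. ds ! i)"

definition Omega :: "nat \<Rightarrow> eta set" where
  "Omega n = {(z, ds). z \<in> {0, 1} \<and> ds \<noteq> [] \<and> ds ! 0 = 0 \<and>
      (\<forall>i\<in>{1..<length ds}. ds ! i \<ge> 1) \<and> psum ds (length ds) = int n}"

definition tidx :: "eta \<Rightarrow> nat \<Rightarrow> nat" where
  "tidx e j = (THE t. t < length (snd e) \<and> psum (snd e) t < int j \<and> int j \<le> psum (snd e) (Suc t))"

definition vvec :: "eta \<Rightarrow> nat \<Rightarrow> int \<times> int" where
  "vvec e j = (let z = fst e; ds = snd e; t = tidx e j;
                   c = int j - psum ds t;
                   Od = (\<Sum>i\<in>{i. i < t \<and> odd i}. ds ! i);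
                   Ev = (\<Sum>i\<in>{i. i < t \<and> even i}. ds ! i)
               in if z = 1 \<and> odd t then (Od + c, 0)
                  else if z = 1 \<and> even t then (0, Ev + c)
                  else if z = 0 \<and> odd t then (0, Od + c)
                  else (Ev + c, 0))"

definition rvec :: "nat \<Rightarrow> eta \<Rightarrow> nat \<Rightarrow> int" where
  "rvec n e j = int n * snd (vvec e j)"

definition zk :: "nat \<Rightarrow> nat \<Rightarrow> nat" where
  "zk n k = (if int k \<le> int n + 1 - int k then 1 else 0)"

text \<open>Given the already constructed d_0, ..., d_(l-1) (the list ds, length l), compute d_l, l >= 1.\<close>
definition next_d :: "nat \<Rightarrow> nat \<Rightarrow> int list \<Rightarrow> nat \<Rightarrow> int" where
  "next_d n k ds l = (let N = int n; K = int k; z = zk n k;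
       Os = (\<Sum>j\<in>{j. j \<le> l - 1 \<and> odd j}. ds ! j);
       Es = (\<Sum>j\<in>{j. j \<le> l - 1 \<and> even j}. ds ! j);
       t = (if z = 1 \<and> odd l then (GREATEST m::nat. int m * K \<le> (Es + 1) * (N + 1 - K))
            else if z = 1 \<and> even l then (GREATEST m::nat. int m * (N + 1 - K) \<le> (Os + 1) * K)
            else if z = 0 \<and> odd l then (GREATEST m::nat. int m * (N + 1 - K) \<le> (Es + 1) * K)
            else (GREATEST m::nat. int m * K \<le> (Os + 1) * (N + 1 - K)));
       s = (if l = 1 then 0 else if odd l then Os else Es)
     in min (N - (\<Sum>j<l. ds ! j)) (int t - s))"

fun dlist :: "nat \<Rightarrow> nat \<Rightarrow> nat \<Rightarrow> int list" where
  "dlist n k 0 = [0]"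
| "dlist n k (Suc l) = (let ds = dlist n k l in ds @ [next_d n k ds (Suc l)])"

definition dk :: "nat \<Rightarrow> nat \<Rightarrow> nat \<Rightarrow> int" where
  "dk n k l = dlist n k l ! l"

definition rk :: "nat \<Rightarrow> nat \<Rightarrow> nat" where
  "rk n k = (LEAST r. (\<Sum>j=1..r. dk n k j) = int n)"

definition etak :: "nat \<Rightarrow> nat \<Rightarrow> eta" where
  "etak n k = (zk n k, map (dk n k) [0..<Suc (rk n k)])"

end

theory Submission imports Defs begin

lemma dlist_len: "length (dlist n k l) = Suc l"
  by (induction l) (auto simp: Let_def)

lemma dlist_nth: "j \<le> l \<Longrightarrow> dlist n k l ! j = dk n k j"
proof (induction l)
  case 0 then show ?case by (simp add: dk_def)
next
  case (Suc l)
  show ?case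
  proof (cases "j = Suc l")
    case True then show ?thesis by (simp add: dk_def)
  next
    case False
    then have "j \<le> l" using Suc.prems by simp
    then have "dlist n k (Suc l) ! j = dlist n k l ! j" by (simp add: Let_def nth_append dlist_len)
    then show ?thesis using Suc.IH \<open>j \<le> l\<close> by simp
  qed
qed

lemma dk0: "dk n k 0 = 0" by (simp add: dk_def)

lemma dk_Suc: "dk n k (Suc l) = next_d n k (dlist n k l) (Suc l)"
  by (simp add: dk_def Let_def nth_append dlist_len)

lemma greatest_int:
  assumes c: "(c::int) > 0" and B: "B \<ge> 0"
  shows "int (GREATEST m::nat. int m * c \<le> B) * c \<le> B \<and> B < (int (GREATEST m::nat. int m * c \<le> B) + 1) * c"
proof -
  let ?g = "nat (B div c)"
  have gi: "int ?g = B div c" using c B by (simp add: pos_imp_zdiv_nonneg_iff)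
  have g1: "int ?g * c \<le> B" unfolding gi using c
    by (metis add.commute add_increasing2 div_mult_mod_eq mult.commute pos_mod_sign order_refl)
  have g2: "B < (int ?g + 1) * c" unfolding gi using c
    by (metis add.commute add_less_cancel_left distrib_right div_mult_mod_eq mult_1 pos_mod_bound)
  have "(GREATEST m::nat. int m * c \<le> B) = ?g"
  proof (rule Greatest_equality)
    show "int ?g * c \<le> B" by (rule g1)
  next
    fix y assume "int y * c \<le> B"
    then have "int y * c < (int ?g + 1) * c" using g2 by linarith
    then have "int y < int ?g + 1" using c by (simp add: mult_less_cancel_right)
    then show "y \<le> ?g" by linarith
  qed
  then show ?thesis using g1 g2 by simp
qed


locale L =
  fixes n k :: nat
  assumes n1: "1 \<le> n" and k1: "1 \<le> k" and kn: "k \<le> n"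
begin

abbreviation D where "D \<equiv> dk n k"
definition S :: "nat \<Rightarrow> int" where "S m = (\<Sum>j<m. D j)"
definition Od :: "nat \<Rightarrow> int" where "Od m = (\<Sum>j\<in>{j. j < m \<and> odd j}. D j)"
definition Ev :: "nat \<Rightarrow> int" where "Ev m = (\<Sum>j\<in>{j. j < m \<and> even j}. D j)"
definition p :: int where "p = (if zk n k = 1 then int k else int n + 1 - int k)"
definition q :: int where "q = (if zk n k = 1 then int n + 1 - int k else int k)"
definition T :: "nat \<Rightarrow> nat" where
  "T l = (if odd l then (GREATEST m::nat. int m * p \<le> (Ev l + 1) * q)
          else (GREATEST m::nat. int m * q \<le> (Od l + 1) * p))"
definition X :: "nat \<Rightarrow> int" where "X l = (if odd l then Od l else Ev l)"
definition Inv :: "nat \<Rightarrow> bool" where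
  "Inv l = (if odd l then (Od l + 1) * p \<le> (Ev l + 1) * q else (Ev l + 1) * q \<le> (Od l + 1) * p)"
definition G :: "nat \<Rightarrow> bool" where "G l = (\<forall>m\<le>l. S m < int n)"

lemma pq: "1 \<le> p" "p \<le> q" "p + q = int n + 1"
  using k1 kn by (auto simp: p_def q_def zk_def)

lemma S_Suc: "S (Suc m) = S m + D m" by (simp add: S_def)
lemma S0: "S 0 = 0" by (simp add: S_def)
lemma S1: "S (Suc 0) = 0" by (simp add: S_def dk0)

lemma Od_Suc: "Od (Suc m) = Od m + (if odd m then D m else 0)"
proof -
  have fin: "finite {j. j < m \<and> odd j}" by simp
  have "{j. j < Suc m \<and> odd j} = (if odd m then insert m {j. j<m \<and> odd j} else {j. j<m \<and> odd j})"
    by (auto simp: less_Suc_eq)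
  then show ?thesis using fin by (simp add: Od_def)
qed

lemma Ev_Suc: "Ev (Suc m) = Ev m + (if even m then D m else 0)"
proof -
  have fin: "finite {j. j < m \<and> even j}" by simp
  have "{j. j < Suc m \<and> even j} = (if even m then insert m {j. j<m \<and> even j} else {j. j<m \<and> even j})"
    by (auto simp: less_Suc_eq)
  then show ?thesis using fin by (simp add: Ev_def)
qed

lemma Od0: "Od 0 = 0" by (simp add: Od_def)
lemma Ev0: "Ev 0 = 0" by (simp add: Ev_def)

lemma S_split: "S m = Od m + Ev m"
  by (induction m) (auto simp: S0 Od0 Ev0 S_Suc Od_Suc Ev_Suc)

lemma Od_nonneg: "(\<forall>j<m. D j \<ge> 0) \<Longrightarrow> Od m \<ge> 0"
  unfolding Od_def by (rule sum_nonneg) auto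
lemma Ev_nonneg: "(\<forall>j<m. D j \<ge> 0) \<Longrightarrow> Ev m \<ge> 0"
  unfolding Ev_def by (rule sum_nonneg) auto

lemma D_Suc: "D (Suc l) = min (int n - S (Suc l)) (int (T (Suc l)) - X (Suc l))"
proof -
  have Os: "(\<Sum>j\<in>{j. j \<le> Suc l - 1 \<and> odd j}. dlist n k l ! j) = Od (Suc l)"
    unfolding Od_def by (intro sum.cong) (auto simp: dlist_nth)
  have Es: "(\<Sum>j\<in>{j. j \<le> Suc l - 1 \<and> even j}. dlist n k l ! j) = Ev (Suc l)"
    unfolding Ev_def by (intro sum.cong) (auto simp: dlist_nth)
  have Ss: "(\<Sum>j<Suc l. dlist n k l ! j) = S (Suc l)"
    unfolding S_def by (intro sum.cong) (auto simp: dlist_nth)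
  have O1: "Od (Suc 0) = 0" by (simp add: Od_Suc Od0)
  show ?thesis
    unfolding dk_Suc next_d_def Let_def Os Es Ss
    by (auto simp: T_def X_def p_def q_def O1 zk_def)
qed

lemma T_bounds:
  assumes "Ev l \<ge> 0" "Od l \<ge> 0"
  shows "odd l \<Longrightarrow> int (T l) * p \<le> (Ev l + 1) * q \<and> (Ev l + 1) * q < (int (T l) + 1) * p"
    and "even l \<Longrightarrow> int (T l) * q \<le> (Od l + 1) * p \<and> (Od l + 1) * p < (int (T l) + 1) * q"
proof -
  have p0: "p > 0" and q0: "q > 0" using pq by auto
  show "odd l \<Longrightarrow> int (T l) * p \<le> (Ev l + 1) * q \<and> (Ev l + 1) * q < (int (T l) + 1) * p"
    unfolding T_def using greatest_int[OF p0, of "(Ev l + 1) * q"] assms q0 by simp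
  show "even l \<Longrightarrow> int (T l) * q \<le> (Od l + 1) * p \<and> (Od l + 1) * p < (int (T l) + 1) * q"
    unfolding T_def using greatest_int[OF q0, of "(Od l + 1) * p"] assms p0 by simp
qed


lemma step:
  assumes l1: "1 \<le> l" and inv: "Inv l" and nn: "\<forall>j<l. D j \<ge> 0" and Sl: "S l < int n"
  shows "D l \<ge> 1" "D l \<le> int n - S l" "D l \<le> int (T l) - X l" "S (Suc l) < int n \<Longrightarrow> Inv (Suc l)"
proof -
  obtain l' where l': "l = Suc l'" using l1 by (cases l) auto
  have Dl: "D l = min (int n - S l) (int (T l) - X l)" using D_Suc l' by simp
  have Oe: "Od l \<ge> 0" "Ev l \<ge> 0" using Od_nonneg Ev_nonneg nn by auto
  have p0: "p > 0" and q0: "q > 0" using pq by auto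
  have TX: "int (T l) - X l \<ge> 1"
  proof (cases "odd l")
    case True
    then have b: "int (T l) * p \<le> (Ev l+1)*q" "(Ev l+1)*q < (int (T l)+1)*p"
      using T_bounds(1)[OF Oe(2) Oe(1)] by auto
    have "(Od l + 1) * p \<le> (Ev l + 1) * q" using inv True by (simp add: Inv_def)
    then have "(Od l + 1) * p < (int (T l) + 1) * p" using b by linarith
    then have "Od l + 1 < int (T l) + 1" using p0 by (simp add: mult_less_cancel_right)
    then show ?thesis using True by (simp add: X_def)
  next
    case False
    then have b: "int (T l) * q \<le> (Od l+1)*p" "(Od l+1)*p < (int (T l)+1)*q"
      using T_bounds(2)[OF Oe(2) Oe(1)] by auto
    have "(Ev l + 1) * q \<le> (Od l + 1) * p" using inv False by (simp add: Inv_def)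
    then have "(Ev l + 1) * q < (int (T l) + 1) * q" using b by linarith
    then have "Ev l + 1 < int (T l) + 1" using q0 by (simp add: mult_less_cancel_right)
    then show ?thesis using False by (simp add: X_def)
  qed
  show "D l \<ge> 1" using Dl TX Sl by simp
  show "D l \<le> int n - S l" using Dl by simp
  show "D l \<le> int (T l) - X l" using Dl by simp
  show "Inv (Suc l)" if h: "S (Suc l) < int n"
  proof -
    have "D l \<noteq> int n - S l" using h S_Suc[of l] by simp
    then have DT: "D l = int (T l) - X l" using Dl by (simp add: min_def split: if_splits)
    show ?thesis
    proof (cases "odd l")
      case True
      then have b: "int (T l) * p \<le> (Ev l+1)*q" "(Ev l+1)*q < (int (T l)+1)*p"
        using T_bounds(1)[OF Oe(2) Oe(1)] by auto
      have "Od (Suc l) = int (T l)" using Od_Suc[of l] True DT by (simp add: X_def)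
      moreover have "Ev (Suc l) = Ev l" using Ev_Suc[of l] True by simp
      ultimately show ?thesis using b True by (simp add: Inv_def)
    next
      case False
      then have b: "int (T l) * q \<le> (Od l+1)*p" "(Od l+1)*p < (int (T l)+1)*q"
        using T_bounds(2)[OF Oe(2) Oe(1)] by auto
      have "Ev (Suc l) = int (T l)" using Ev_Suc[of l] False DT by (simp add: X_def)
      moreover have "Od (Suc l) = Od l" using Od_Suc[of l] False by simp
      ultimately show ?thesis using b False by (simp add: Inv_def)
    qed
  qed
qed

lemma main: "1 \<le> l \<Longrightarrow> G l \<Longrightarrow> Inv l \<and> (\<forall>j<l. D j \<ge> 0) \<and> int l - 1 \<le> S l"
proof (induction l rule: nat_induct_at_least)
  case base
  have "Od 1 = 0" "Ev 1 = 0" by (simp_all add: Od_Suc Ev_Suc Od0 Ev0 dk0)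
  then show ?case using pq by (simp add: Inv_def dk0 S1)
next
  case (Suc l)
  have Gl: "G l" using Suc.prems by (simp add: G_def)
  then have IH: "Inv l" "\<forall>j<l. D j \<ge> 0" "int l - 1 \<le> S l" using Suc.IH by auto
  have Sl: "S l < int n" using Gl by (simp add: G_def)
  have SSl: "S (Suc l) < int n" using Suc.prems by (simp add: G_def)
  note st = step[OF Suc.hyps IH(1) IH(2) Sl]
  have "\<forall>j<Suc l. D j \<ge> 0" using IH(2) st(1) by (auto simp: less_Suc_eq)
  moreover have "int (Suc l) - 1 \<le> S (Suc l)" using IH(3) st(1) S_Suc[of l] by simp
  ultimately show ?case using st(4)[OF SSl] by simp
qed

lemma sum1: "(\<Sum>j=1..m. D j) = S (Suc m)"
  by (induction m) (simp_all add: S_Suc S0 dk0)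

definition r where "r = rk n k"

lemma r_props: "1 \<le> r" "G r" "S (Suc r) = int n"
proof -
  have G0: "G 0" "G 1" using n1 by (auto simp: G_def S0 S1 le_Suc_eq)
  have nG: "\<not> G (Suc n)"
  proof
    assume g: "G (Suc n)"
    then have "int (Suc n) - 1 \<le> S (Suc n)" using main[of "Suc n"] by simp
    moreover have "S (Suc n) < int n" using g by (simp add: G_def)
    ultimately show False by simp
  qed
  define m0 where "m0 = (LEAST m. \<not> G m)"
  have m0: "\<not> G m0" unfolding m0_def using nG by (rule LeastI)
  have lt: "m < m0 \<Longrightarrow> G m" for m unfolding m0_def using not_less_Least by blast
  have "m0 \<ge> 2"
  proof (rule ccontr)
    assume "\<not> 2 \<le> m0"
    then have "m0 = 0 \<or> m0 = 1" by auto
    then show False using m0 G0 by auto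
  qed
  define r0 where "r0 = m0 - 1"
  have r01: "1 \<le> r0" and Gr0: "G r0" and m0r: "m0 = Suc r0" using \<open>m0 \<ge> 2\<close> lt by (auto simp: r0_def)
  have "\<not> S (Suc r0) < int n"
  proof
    assume "S (Suc r0) < int n"
    then have "G (Suc r0)" using Gr0 by (auto simp: G_def le_Suc_eq)
    then show False using m0 m0r by simp
  qed
  moreover have "S (Suc r0) \<le> int n"
  proof -
    note mm = main[OF r01 Gr0]
    have "S r0 < int n" using Gr0 by (simp add: G_def)
    then have "D r0 \<le> int n - S r0" using step(2)[OF r01 _ _] mm by blast
    then show ?thesis using S_Suc[of r0] by simp
  qed
  ultimately have Sr0: "S (Suc r0) = int n" by simp
  have "rk n k = r0"
    unfolding rk_def
  proof (rule Least_equality)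
    show "(\<Sum>j=1..r0. D j) = int n" using sum1 Sr0 by simp
  next
    fix y assume "(\<Sum>j=1..y. D j) = int n"
    then have "S (Suc y) = int n" using sum1 by simp
    show "r0 \<le> y"
    proof (rule ccontr)
      assume "\<not> r0 \<le> y"
      then have "Suc y \<le> r0" by simp
      then have "S (Suc y) < int n" using Gr0 by (simp add: G_def)
      with \<open>S (Suc y) = int n\<close> show False by simp
    qed
  qed
  then show "1 \<le> r" "G r" "S (Suc r) = int n" using r01 Gr0 Sr0 by (simp_all add: r_def)
qed


lemma blk:
  assumes "1 \<le> l" "l \<le> r"
  shows "G l" "Inv l" "D l \<ge> 1" "D l \<le> int (T l) - X l" "S l < int n" "\<forall>j<l. D j \<ge> 0"
proof -
  show Gl: "G l" using r_props(2) assms by (auto simp: G_def)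
  note mm = main[OF assms(1) Gl]
  show Sl: "S l < int n" using Gl by (simp add: G_def)
  show "Inv l" "\<forall>j<l. D j \<ge> 0" using mm by auto
  show "D l \<ge> 1" "D l \<le> int (T l) - X l" using step[OF assms(1) _ _ Sl] mm by auto
qed

lemma Dnn: "j \<le> r \<Longrightarrow> D j \<ge> 0"
  using blk(3)[of j] by (cases "j = 0") (auto simp: dk0)

lemma S_mono: "a \<le> b \<Longrightarrow> b \<le> Suc r \<Longrightarrow> S a \<le> S b"
proof (induction b)
  case 0 then show ?case by simp
next
  case (Suc b)
  show ?case
  proof (cases "a = Suc b")
    case True then show ?thesis by simp
  next
    case False
    then have "S a \<le> S b" using Suc by simp
    then show ?thesis using S_Suc[of b] Dnn[of b] Suc.prems by simp
  qed
qed

lemma OEnn: "l \<le> Suc r \<Longrightarrow> Od l \<ge> 0 \<and> Ev l \<ge> 0"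
  using Od_nonneg[of l] Ev_nonneg[of l] Dnn by auto

lemma etak_eq: "etak n k = (zk n k, map D [0..<Suc r])"
  by (simp add: etak_def r_def)

lemma psum_eq: "t \<le> Suc r \<Longrightarrow> psum (map D [0..<Suc r]) t = S t"
  unfolding psum_def S_def by (intro sum.cong) (auto simp del: upt_Suc)

lemma tidx_eq:
  assumes l: "1 \<le> l" "l \<le> r" and i: "S l < int i" "int i \<le> S (Suc l)"
  shows "tidx (etak n k) i = l"
  unfolding tidx_def etak_eq snd_conv
proof (rule the_equality)
  show "l < length (map D [0..<Suc r]) \<and> psum (map D [0..<Suc r]) l < int i \<and> int i \<le> psum (map D [0..<Suc r]) (Suc l)"
    using l i psum_eq[of l] psum_eq[of "Suc l"] by simp
next
  fix t assume h: "t < length (map D [0..<Suc r]) \<and> psum (map D [0..<Suc r]) t < int i \<and> int i \<le> psum (map D [0..<Suc r]) (Suc t)"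
  then have t: "t \<le> r" "S t < int i" "int i \<le> S (Suc t)" using psum_eq[of t] psum_eq[of "Suc t"] by auto
  show "t = l"
  proof (rule ccontr)
    assume "t \<noteq> l"
    then have "t < l \<or> l < t" by auto
    then show False
    proof
      assume "t < l"
      then have "S (Suc t) \<le> S l" using S_mono l by simp
      then show False using t i by simp
    next
      assume "l < t"
      then have "S (Suc l) \<le> S t" using S_mono t by simp
      then show False using t i by simp
    qed
  qed
qed

lemma blk_unique:
  assumes "1 \<le> l" "l \<le> r" "S l < int i" "int i \<le> S (Suc l)"
      and "1 \<le> l'" "l' \<le> r" "S l' < int i" "int i \<le> S (Suc l')"
  shows "l = l'"
  using tidx_eq[OF assms(1-4)] tidx_eq[OF assms(5-8)] by simp

definition F :: "nat \<Rightarrow> int" where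
  "F i = fk k (vvec (etak n k) i) + rvec n (etak n k) i"

lemma F_eq:
  assumes l: "1 \<le> l" "l \<le> r" and i: "S l < int i" "int i \<le> S (Suc l)"
  shows "F i = (if odd l then p * (Od l + (int i - S l)) else q * (Ev l + (int i - S l)))"
proof -
  have Oq: "(\<Sum>j\<in>{j. j < l \<and> odd j}. map D [0..<Suc r] ! j) = Od l"
    unfolding Od_def using l by (intro sum.cong) (auto simp del: upt_Suc)
  have Eq: "(\<Sum>j\<in>{j. j < l \<and> even j}. map D [0..<Suc r] ! j) = Ev l"
    unfolding Ev_def using l by (intro sum.cong) (auto simp del: upt_Suc)
  have ps: "psum (map D [0..<Suc r]) l = S l" using psum_eq l by simp
  have v: "vvec (etak n k) i = (if zk n k = 1 \<and> odd l then (Od l + (int i - S l), 0)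
                  else if zk n k = 1 \<and> even l then (0, Ev l + (int i - S l))
                  else if zk n k = 0 \<and> odd l then (0, Od l + (int i - S l))
                  else (Ev l + (int i - S l), 0))"
    unfolding vvec_def tidx_eq[OF l i] Let_def using Oq Eq ps by (simp add: etak_eq)
  have z: "zk n k = 1 \<or> zk n k = 0" by (simp add: zk_def)
  show ?thesis
    using z unfolding F_def rvec_def v fk_def p_def q_def
    by (auto simp: algebra_simps)
qed

definition Bd :: "nat \<Rightarrow> int" where
  "Bd l = (if odd l then (Ev l + 1) * q else (Od l + 1) * p)"

lemma bound:
  assumes l: "1 \<le> l" "l \<le> r" and i: "S l < int i" "int i \<le> S (Suc l)"
  shows "F i \<le> Bd l"
proof -
  note b = blk[OF l]
  have c: "int i - S l \<le> D l" using i S_Suc[of l] by simp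
  have oe: "Od l \<ge> 0" "Ev l \<ge> 0" using OEnn l by auto
  have p0: "p > 0" and q0: "q > 0" using pq by auto
  show ?thesis
  proof (cases "odd l")
    case True
    have tb: "int (T l) * p \<le> (Ev l+1)*q" using T_bounds(1)[OF oe(2) oe(1) True] by simp
    have "Od l + (int i - S l) \<le> int (T l)" using c b(4) True by (simp add: X_def)
    then have "p * (Od l + (int i - S l)) \<le> p * int (T l)" using p0 by (simp add: mult_left_mono)
    then show ?thesis using F_eq[OF l i] True tb by (simp add: Bd_def mult.commute)
  next
    case False
    have tb: "int (T l) * q \<le> (Od l+1)*p" using T_bounds(2)[OF oe(2) oe(1)] False by simp
    have "Ev l + (int i - S l) \<le> int (T l)" using c b(4) False by (simp add: X_def)
    then have "q * (Ev l + (int i - S l)) \<le> q * int (T l)" using q0 by (simp add: mult_left_mono)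
    then show ?thesis using F_eq[OF l i] False tb by (simp add: Bd_def mult.commute)
  qed
qed

lemma in_block:
  assumes "1 \<le> i" "i \<le> n"
  shows "\<exists>l. 1 \<le> l \<and> l \<le> r \<and> S l < int i \<and> int i \<le> S (Suc l)"
proof -
  define m0 where "m0 = (LEAST m. int i \<le> S m)"
  have ex: "int i \<le> S (Suc r)" using r_props(3) assms by simp
  have m0: "int i \<le> S m0" unfolding m0_def using ex by (rule LeastI)
  have m0le: "m0 \<le> Suc r" unfolding m0_def using ex by (rule Least_le)
  have lt: "m < m0 \<Longrightarrow> \<not> int i \<le> S m" for m unfolding m0_def by (rule not_less_Least)
  have "\<not> m0 \<le> 1"
  proof
    assume "m0 \<le> 1"
    then have "m0 = 0 \<or> m0 = Suc 0" by auto
    then show False using m0 assms S0 S1 by auto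
  qed
  then obtain l where l: "m0 = Suc l" "1 \<le> l" by (cases m0) auto
  show ?thesis using l lt[of l] m0 m0le by (intro exI[of _ l]) auto
qed

lemma p2: "2 \<le> r \<Longrightarrow> 2 \<le> p"
proof (rule ccontr)
  assume r2: "2 \<le> r" and "\<not> 2 \<le> p"
  then have p1: "p = 1" using pq by simp
  then have qn: "q = int n" using pq by simp
  have o1: "Od 1 = 0" "Ev 1 = 0" by (simp_all add: Od_Suc Ev_Suc Od0 Ev0 dk0)
  have tb: "int (T 1) * p \<le> (Ev 1+1)*q \<and> (Ev 1+1)*q < (int (T 1)+1)*p"
    using T_bounds(1)[of 1] o1 by simp
  then have "int (T 1) = int n" using p1 qn o1 by simp
  then have "D 1 = int n" using D_Suc[of 0] o1 S1 by (simp add: X_def)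
  then have "S 2 = int n" using S_Suc[of 1] S1 by (simp add: numeral_2_eq_2)
  moreover have "S 2 < int n" using r_props(2) r2 by (simp add: G_def)
  ultimately show False by simp
qed

lemma step_cases:
  assumes l: "1 \<le> l" "l \<le> r" and i: "S l < int i" "int i \<le> S (Suc l)" and n: "Suc i \<le> n"
  shows "(int (Suc i) \<le> S (Suc l) \<and> F (Suc i) = F i + (if odd l then p else q))
       \<or> (int i = S (Suc l) \<and> Suc l \<le> r \<and> S (Suc l) < int (Suc i) \<and> int (Suc i) \<le> S (Suc (Suc l)) \<and> F (Suc i) = Bd l)"
proof (cases "int (Suc i) \<le> S (Suc l)")
  case True
  have i2: "S l < int (Suc i)" using i by simp
  show ?thesis using True F_eq[OF l i] F_eq[OF l i2 True] by (auto simp: algebra_simps)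
next
  case False
  then have ii: "int i = S (Suc l)" using i by simp
  have "l \<noteq> r" using ii r_props(3) n by auto
  then have l1: "1 \<le> Suc l" "Suc l \<le> r" using l by auto
  have "D (Suc l) \<ge> 1" using blk(3)[OF l1] .
  then have i2: "S (Suc l) < int (Suc i)" "int (Suc i) \<le> S (Suc (Suc l))"
    using ii S_Suc[of "Suc l"] by auto
  have "F (Suc i) = Bd l"
    using F_eq[OF l1 i2] ii by (auto simp: Bd_def Od_Suc Ev_Suc algebra_simps)
  then show ?thesis using ii l1 i2 by simp
qed

lemma one_step:
  assumes "1 \<le> i" "Suc i \<le> n" shows "F i \<le> F (Suc i)"
proof -
  obtain l where l: "1 \<le> l" "l \<le> r" "S l < int i" "int i \<le> S (Suc l)" using in_block assms by force
  have "p > 0" "q > 0" using pq by auto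
  then show ?thesis using step_cases[OF l assms(2)] bound[OF l] by auto
qed

lemma F_mono: "1 \<le> i \<Longrightarrow> i < i' \<Longrightarrow> i' \<le> n \<Longrightarrow> F i \<le> F i'"
proof (induction i')
  case 0 then show ?case by simp
next
  case (Suc i')
  show ?case
  proof (cases "i = i'")
    case True then show ?thesis using one_step Suc.prems by simp
  next
    case False
    then have "F i \<le> F i'" using Suc by simp
    moreover have "F i' \<le> F (Suc i')" using one_step[of i'] Suc.prems False by simp
    ultimately show ?thesis by simp
  qed
qed

lemma part5:
  assumes "2 < l" "l \<le> n" "F l = F (l - 1)"
  shows "F l \<ge> F (l - 2) + 2"
proof -
  obtain i where i: "l = Suc (Suc i)" "1 \<le> i" using assms(1) by (cases l; cases "l - 1") auto
  have Fi: "F (Suc (Suc i)) = F (Suc i)" using assms(3) i by simp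
  obtain L where L: "1 \<le> L" "L \<le> r" "S L < int (Suc i)" "int (Suc i) \<le> S (Suc L)"
    using in_block[of "Suc i"] assms i by force
  have p0: "p > 0" "q \<ge> p" using pq by auto
  have w: "(if odd L then p else q) > 0" using p0 by auto
  have nn: "Suc (Suc i) \<le> n" using assms i by simp
  from step_cases[OF L nn]
  have c: "int (Suc i) = S (Suc L) \<and> Suc L \<le> r \<and> F (Suc (Suc i)) = Bd L"
  proof (elim disjE)
    assume "int (Suc (Suc i)) \<le> S (Suc L) \<and> F (Suc (Suc i)) = F (Suc i) + (if odd L then p else q)"
    then show ?thesis using Fi w by simp
  qed simp
  have pp: "2 \<le> p" using p2 c L by simp
  obtain L' where L': "1 \<le> L'" "L' \<le> r" "S L' < int i" "int i \<le> S (Suc L')"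
    using in_block[of i] assms i by force
  note sc = step_cases[OF L']
  show ?thesis
  proof (cases "int (Suc i) \<le> S (Suc L')")
    case True
    then have "L' = L" using blk_unique[OF L'(1,2) _ _ L] L' by simp
    then have "F (Suc i) = F i + (if odd L then p else q)" using sc True assms i by auto
    then show ?thesis using Fi i pp p0 by (auto split: if_splits)
  next
    case False
    then have c2: "int i = S (Suc L')" "Suc L' \<le> r" "S (Suc L') < int (Suc i)" "int (Suc i) \<le> S (Suc (Suc L'))"
      using sc assms i by auto
    have LL: "L = Suc L'" using blk_unique[OF L _ _ c2(3,4), of] c2(2) by simp
    have Fi0: "F i = (if odd L' then p * Od L else q * Ev L)"
      using F_eq[OF L'] c2(1) LL S_Suc[of L'] by (auto simp: Od_Suc Ev_Suc algebra_simps)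
    have "F l = Bd L" using c i by simp
    then show ?thesis using Fi0 LL pp p0 i by (auto simp: Bd_def algebra_simps)
  qed
qed


lemma sumE: "odd l \<Longrightarrow> (\<Sum>j\<in>{j. j \<le> l \<and> even j}. D j) = Ev l"
proof -
  assume o: "odd l"
  have "{j. j \<le> l \<and> even j} = {j. j < l \<and> even j}" using o by (auto simp: le_less)
  then show ?thesis by (simp add: Ev_def)
qed

lemma sumO: "even l \<Longrightarrow> (\<Sum>j\<in>{j. j \<le> l \<and> odd j}. D j) = Od l"
proof -
  assume o: "even l"
  have "{j. j \<le> l \<and> odd j} = {j. j < l \<and> odd j}" using o by (auto simp: le_less)
  then show ?thesis by (simp add: Od_def)
qed

lemma fk1: "fk k (smul c (int n, int n + 1)) = c * (int n + 1 - int k)"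
  by (simp add: fk_def smul_def algebra_simps)
lemma fk2: "fk k (smul c (1, 0)) = c * int k"
  by (simp add: fk_def smul_def algebra_simps)
lemma fkv: "fk k (vadd x (smul c (1, 1))) = fk k x + c"
  by (simp add: fk_def smul_def vadd_def algebra_simps)

lemma final:
  "((\<exists>r'. (\<Sum>j=1..r'. dk n k j) = int n) \<and> (\<forall>l\<in>{1..r}. dk n k l > 0) \<and> etak n k \<in> Omega n)
  \<and> (\<forall>i l. 1 \<le> i \<and> i \<le> n \<and> 1 \<le> l \<and> l \<le> r \<and> S l < int i \<and> int i \<le> S (Suc l) \<longrightarrow>
        (zk n k = 1 \<and> odd l \<longrightarrow> F i \<le>
            fk k (smul ((\<Sum>j\<in>{j. j \<le> l \<and> even j}. dk n k j) + 1) (int n, int n + 1)))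
      \<and> (zk n k = 1 \<and> even l \<longrightarrow> F i \<le>
            fk k (smul ((\<Sum>j\<in>{j. j \<le> l \<and> odd j}. dk n k j) + 1) (1, 0)))
      \<and> (zk n k = 0 \<and> odd l \<longrightarrow> F i \<le>
            fk k (smul ((\<Sum>j\<in>{j. j \<le> l \<and> even j}. dk n k j) + 1) (1, 0)))
      \<and> (zk n k = 0 \<and> even l \<longrightarrow> F i \<le>
            fk k (smul ((\<Sum>j\<in>{j. j \<le> l \<and> odd j}. dk n k j) + 1) (int n, int n + 1))))
  \<and> (\<forall>i i' l. 1 \<le> i \<and> 1 \<le> l \<and> l \<le> r \<and> S l < int i \<and> i < i' \<and> int i' \<le> S (Suc l) \<longrightarrow>
        F i \<le> F i')
  \<and> (\<forall>i i'. 1 \<le> i \<and> i < i' \<and> i' \<le> n \<longrightarrow> F i \<le> F i')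
  \<and> (\<forall>l. 2 < l \<and> l \<le> n \<and> F l = F (l - 1) \<longrightarrow> F l \<ge> F (l - 2) + 2)"
proof (intro conjI allI impI ballI)
  show "\<exists>r'. (\<Sum>j=1..r'. dk n k j) = int n" using sum1 r_props(3) by auto
next
  fix l assume "l \<in> {1..r}" then show "dk n k l > 0" using blk(3)[of l] by auto
next
  show "etak n k \<in> Omega n"
  proof -
    have a: "zk n k \<in> {0, 1}" by (simp add: zk_def)
    have b: "map D [0..<Suc r] ! 0 = 0" by (simp add: dk0 nth_map del: upt_Suc)
    have c: "\<forall>i\<in>{1..<length (map D [0..<Suc r])}. map D [0..<Suc r] ! i \<ge> 1"
      using blk(3) by (auto simp del: upt_Suc)
    have d: "psum (map D [0..<Suc r]) (length (map D [0..<Suc r])) = int n"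
      using psum_eq r_props(3) by (simp del: upt_Suc)
    have e: "map D [0..<Suc r] \<noteq> []" by (simp del: upt_Suc)
    show ?thesis unfolding etak_eq Omega_def using a b c d e by blast
  qed
next
  fix i l assume h: "1 \<le> i \<and> i \<le> n \<and> 1 \<le> l \<and> l \<le> r \<and> S l < int i \<and> int i \<le> S (Suc l)"
  then have b: "F i \<le> Bd l" using bound by auto
  show "zk n k = 1 \<and> odd l \<Longrightarrow> F i \<le> fk k (smul ((\<Sum>j\<in>{j. j \<le> l \<and> even j}. dk n k j) + 1) (int n, int n + 1))"
    using b by (simp add: sumE fk1 Bd_def q_def)
  show "zk n k = 1 \<and> even l \<Longrightarrow> F i \<le> fk k (smul ((\<Sum>j\<in>{j. j \<le> l \<and> odd j}. dk n k j) + 1) (1, 0))"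
    using b by (simp add: sumO fk2 Bd_def p_def)
  show "zk n k = 0 \<and> odd l \<Longrightarrow> F i \<le> fk k (smul ((\<Sum>j\<in>{j. j \<le> l \<and> even j}. dk n k j) + 1) (1, 0))"
    using b by (simp add: sumE fk2 Bd_def q_def)
  show "zk n k = 0 \<and> even l \<Longrightarrow> F i \<le> fk k (smul ((\<Sum>j\<in>{j. j \<le> l \<and> odd j}. dk n k j) + 1) (int n, int n + 1))"
    using b by (simp add: sumO fk1 Bd_def p_def)
next
  fix i i' l assume h: "1 \<le> i \<and> 1 \<le> l \<and> l \<le> r \<and> S l < int i \<and> i < i' \<and> int i' \<le> S (Suc l)"
  then have h1: "1 \<le> l" "l \<le> r" "S l < int i" "int i \<le> S (Suc l)" "S l < int i'" "int i' \<le> S (Suc l)" by auto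
  have "p > 0" "q > 0" using pq by auto
  then show "F i \<le> F i'" using F_eq[OF h1(1-4)] F_eq[OF h1(1,2,5,6)] h by auto
next
  fix i i' assume "1 \<le> i \<and> i < i' \<and> i' \<le> n" then show "F i \<le> F i'" using F_mono by auto
next
  fix l assume "2 < l \<and> l \<le> n \<and> F l = F (l - 1)" then show "F l \<ge> F (l - 2) + 2" using part5 by auto
qed

end

theorem lemma3p7:
  fixes n k :: nat
  assumes "1 \<le> n" and "1 \<le> k" and "k \<le> n"
  defines "d \<equiv> dk n k" and "r \<equiv> rk n k" and "z \<equiv> zk n k" and "e \<equiv> etak n k"
  defines "v \<equiv> vvec (etak n k)" and "rr \<equiv> rvec n (etak n k)"
  defines "S \<equiv> (\<lambda>m. \<Sum>j<m. dk n k j)"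
  shows
   "((\<exists>r'. (\<Sum>j=1..r'. d j) = int n) \<and> (\<forall>l\<in>{1..r}. d l > 0) \<and> e \<in> Omega n)
  \<and> (\<forall>i l. 1 \<le> i \<and> i \<le> n \<and> 1 \<le> l \<and> l \<le> r \<and> S l < int i \<and> int i \<le> S (Suc l) \<longrightarrow>
        (z = 1 \<and> odd l \<longrightarrow> fk k (v i) + rr i \<le>
            fk k (smul ((\<Sum>j\<in>{j. j \<le> l \<and> even j}. d j) + 1) (int n, int n + 1)))
      \<and> (z = 1 \<and> even l \<longrightarrow> fk k (v i) + rr i \<le>
            fk k (smul ((\<Sum>j\<in>{j. j \<le> l \<and> odd j}. d j) + 1) (1, 0)))
      \<and> (z = 0 \<and> odd l \<longrightarrow> fk k (v i) + rr i \<le>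
            fk k (smul ((\<Sum>j\<in>{j. j \<le> l \<and> even j}. d j) + 1) (1, 0)))
      \<and> (z = 0 \<and> even l \<longrightarrow> fk k (v i) + rr i \<le>
            fk k (smul ((\<Sum>j\<in>{j. j \<le> l \<and> odd j}. d j) + 1) (int n, int n + 1))))
  \<and> (\<forall>i i' l. 1 \<le> i \<and> 1 \<le> l \<and> l \<le> r \<and> S l < int i \<and> i < i' \<and> int i' \<le> S (Suc l) \<longrightarrow>
        fk k (v i) + rr i \<le> fk k (v i') + rr i')
  \<and> (\<forall>i i'. 1 \<le> i \<and> i < i' \<and> i' \<le> n \<longrightarrow>
        fk k (vadd (v i) (smul (rr i) (1, 1))) \<le> fk k (vadd (v i') (smul (rr i') (1, 1))))
  \<and> (\<forall>l. 2 < l \<and> l \<le> n \<and>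
        fk k (vadd (v l) (smul (rr l) (1, 1))) = fk k (vadd (v (l - 1)) (smul (rr (l - 1)) (1, 1))) \<longrightarrow>
        fk k (vadd (v l) (smul (rr l) (1, 1))) \<ge> fk k (vadd (v (l - 2)) (smul (rr (l - 2)) (1, 1))) + 2)"
proof -
  interpret L n k using assms(1-3) by unfold_locales
  show ?thesis
    using L.final[OF L_axioms]
    unfolding assms(4-10) L.S_def[OF L_axioms] L.r_def[OF L_axioms] L.F_def[OF L_axioms] L.fkv[OF L_axioms]
    by simp
qed

end
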